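(* Fix an integer $k\ge1$. Let $\phi(s)=c_0s+\varphi(s)$ with $c_0\in\mathbb{N}_0$ and $\varphi\in\mathcal{D}_k$, be a non-constant analytic map $\mathbb{C}_0\to\mathbb{C}_0$ such that $C_\phi f=f\circ\phi$ maps $\mathcal{A}_k^+$ into itself. Then $C_\phi:\mathcal{A}_k^+\to\mathcal{A}_k^+$ is an isometry if and only if $\phi(s)=c_0s+i\tau$ with $c_0\in\mathbb{N}=\{1,2,\dots\}$ and $\tau\in\mathbb{R}$.
   Context: $\mathbb{C}_0=\{\operatorname{Re}s>0\}$. $\mathcal{A}^+$ is the Banach algebra of Dirichlet series $f(s)=\sum_{n\ge1}a_nn^{-s}$ with $\|f\|_{\mathcal{A}^+}=\sum|a_n|<\infty$ (pointwise product). $\mathcal{D}$ is the space of analytic functions on $\mathbb{C}_0$ representable by a convergent Dirichlet series for $\operatorname{Re}s$ large. Let $p_1<\dots<p_k$ be the first $k$ primes and $P^+(n)$ the largest prime factor of $n$ ($P^+(1)=1$). $\mathcal{A}_k^+$ is the subalgebra of $f\in\mathcal{A}^+$ with $a_n=0$ unless $P^+(n)\le p_k$ (the Dirichlet expansion only involves $p_1,\dots,p_k$), with the norm of $\mathcal{A}^+$; $\mathcal{D}_k$ is defined similarly as the subspace of $\mathcal{D}$ whose Dirichlet expansions only involve integers $n$ with all prime factors among $p_1,\dots,p_k$. *)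

theory Defs
  imports "HOL-Analysis.Analysis" "HOL-Computational_Algebra.Primes"
begin

definition C0 :: "complex set" where
  "C0 = {s. Re s > 0}"

text \<open>The first k primes p_1 < ... < p_k: a prime p is among them iff
  the number of primes q <= p is at most k.\<close>
definition first_primes :: "nat \<Rightarrow> nat set" where
  "first_primes k = {p. prime p \<and> card {q. prime q \<and> q \<le> p} \<le> k}"

definition smooth :: "nat \<Rightarrow> nat \<Rightarrow> bool" where
  "smooth k n \<longleftrightarrow> n \<ge> 1 \<and> prime_factors n \<subseteq> first_primes k"

text \<open>Dirichlet series with coefficients a (a 0 is never used for smooth support).\<close>
definition dir_term :: "(nat \<Rightarrow> complex) \<Rightarrow> complex \<Rightarrow> nat \<Rightarrow> complex" where
  "dir_term a s n = a n * (of_nat n) powr (- s)"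

definition dir_eval :: "(nat \<Rightarrow> complex) \<Rightarrow> complex \<Rightarrow> complex" where
  "dir_eval a s = (\<Sum>n. dir_term a s n)"

text \<open>Coefficient sequences of elements of A_k^+.\<close>
definition Ak :: "nat \<Rightarrow> (nat \<Rightarrow> complex) set" where
  "Ak k = {a. (\<forall>n. a n \<noteq> 0 \<longrightarrow> smooth k n) \<and> summable (\<lambda>n. norm (a n))}"

definition Anorm :: "(nat \<Rightarrow> complex) \<Rightarrow> real" where
  "Anorm a = (\<Sum>n. norm (a n))"

definition Dk :: "nat \<Rightarrow> (complex \<Rightarrow> complex) set" where
  "Dk k = {f. f holomorphic_on C0 \<and>
     (\<exists>b \<sigma>. (\<forall>n. b n \<noteq> 0 \<longrightarrow> smooth k n) \<and>
        (\<forall>s. Re s > \<sigma> \<longrightarrow> (dir_term b s sums f s)))}"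

definition comp_maps_into :: "nat \<Rightarrow> (complex \<Rightarrow> complex) \<Rightarrow> bool" where
  "comp_maps_into k \<phi> \<longleftrightarrow>
     (\<forall>a\<in>Ak k. \<exists>b\<in>Ak k. \<forall>s\<in>C0. dir_eval a (\<phi> s) = dir_eval b s)"

definition comp_isometry :: "nat \<Rightarrow> (complex \<Rightarrow> complex) \<Rightarrow> bool" where
  "comp_isometry k \<phi> \<longleftrightarrow>
     (\<forall>a\<in>Ak k. \<forall>b\<in>Ak k. (\<forall>s\<in>C0. dir_eval a (\<phi> s) = dir_eval b s) \<longrightarrow> Anorm b = Anorm a)"

end

theory Submission
  imports Defs
begin


lemma t1: assumes "(x::real) > 0" "x < 1" shows "((\<lambda>\<sigma>. x powr \<sigma>) \<longlongrightarrow> 0) at_top"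
proof -
  have "filterlim (\<lambda>\<sigma>. ln x * \<sigma>) at_bot at_top"
    by (rule filterlim_tendsto_neg_mult_at_bot[OF tendsto_const]) (use assms in \<open>auto simp: filterlim_ident\<close>)
  then have "((\<lambda>\<sigma>. exp (\<sigma> * ln x)) \<longlongrightarrow> 0) at_top"
    by (intro filterlim_compose[OF exp_at_bot]) (simp add: mult.commute)
  then show ?thesis using assms by (simp add: powr_def)
qed

lemma t2a: "real k powr (-\<sigma>) * real N powr \<sigma> = (real N / real k) powr \<sigma>"
proof -
  have "real k powr (-\<sigma>) * real N powr \<sigma> = real N powr \<sigma> / real k powr \<sigma>" by (simp add: powr_minus divide_inverse mult.commute)
  also have "\<dots> = (real N / real k) powr \<sigma>" by (simp add: powr_divide)
  finally show ?thesis .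
qed

lemma t2: assumes "(N::nat) \<ge> 1" "N \<le> k" "\<sigma>1 \<le> \<sigma>" shows "real k powr (-\<sigma>) * real N powr \<sigma> \<le> real N powr \<sigma>1 * real k powr (-\<sigma>1)"
proof -
  have k: "real k > 0" using assms by auto
  have "real k powr (-\<sigma>) * real N powr \<sigma> = real N powr \<sigma> / real k powr \<sigma>" by (simp add: powr_minus divide_inverse mult.commute)
  also have "\<dots> = (real N / real k) powr \<sigma>" by (simp add: powr_divide)
  also have "\<dots> \<le> (real N / real k) powr \<sigma>1" by (rule powr_mono') (use assms k in auto)
  also have "\<dots> = real N powr \<sigma>1 / real k powr \<sigma>1" by (simp add: powr_divide)
  also have "\<dots> = real N powr \<sigma>1 * real k powr (-\<sigma>1)" by (simp add: powr_minus divide_inverse)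
  finally show ?thesis .
qed

lemma norm_npow: "norm (of_nat n powr (-s) :: complex) = real n powr (- Re s)"
  by (simp add: norm_powr_real_powr)

lemma npow_real: "(of_nat n :: complex) powr (- of_real \<sigma>) = of_real (real n powr (-\<sigma>))"
  by (metis of_real_minus of_real_of_nat_eq of_nat_0_le_iff powr_of_real)

lemma npow_real': "(of_nat n :: complex) powr (of_real \<sigma>) = of_real (real n powr \<sigma>)"
  by (metis of_real_of_nat_eq of_nat_0_le_iff powr_of_real)

lemma lead_lim:
  fixes F :: "nat \<Rightarrow> complex"
  assumes summ: "summable (\<lambda>n. norm (F n) * real n powr (-\<sigma>1))" and s1: "\<sigma>1 \<ge> 0" and N: "N \<ge> 1"
    and low: "\<And>j. 1 \<le> j \<Longrightarrow> j < N \<Longrightarrow> F j = 0"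
  shows "((\<lambda>\<sigma>::real. dir_eval F (of_real \<sigma>) * of_nat N powr (of_real \<sigma>)) \<longlongrightarrow> F N) at_top"
proof -
  define a where "a k \<sigma> = dir_term F (of_real \<sigma>) k * of_nat N powr (of_real \<sigma>)" for k \<sigma>
  define M where "M k = real N powr \<sigma>1 * (norm (F k) * real k powr (-\<sigma>1))" for k
  have aeq: "a k \<sigma> = F k * of_real (real k powr (-\<sigma>) * real N powr \<sigma>)" for k \<sigma>
    by (simp add: a_def dir_term_def npow_real npow_real')
  have lim: "((\<lambda>\<sigma>. a k \<sigma>) \<longlongrightarrow> (if k = N then F N else 0)) at_top" for k
  proof (cases "k = 0 \<or> k < N")
    case True
    then have "a k = (\<lambda>\<sigma>. 0)" using low N by (auto simp: aeq fun_eq_iff)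
    then show ?thesis using True N by auto
  next
    case False
    show ?thesis
    proof (cases "k = N")
      case True
      then have "a k = (\<lambda>\<sigma>. F N)" using N by (auto simp: aeq fun_eq_iff powr_minus)
      then show ?thesis using True by auto
    next
      case kN: False
      with False have kN': "k > N" by auto
      have "((\<lambda>\<sigma>. (real N / real k) powr \<sigma>) \<longlongrightarrow> 0) at_top"
        by (rule t1) (use kN' N in auto)
      moreover have "real k powr (-\<sigma>) * real N powr \<sigma> = (real N / real k) powr \<sigma>" for \<sigma>
        by (rule t2a)
      ultimately have "((\<lambda>\<sigma>. F k * of_real (real k powr (-\<sigma>) * real N powr \<sigma>)) \<longlongrightarrow> F k * of_real 0) at_top"
        by (intro tendsto_intros) auto
      then show ?thesis using kN by (simp add: aeq)
    qed
  qed
  have bound: "eventually (\<lambda>(k,\<sigma>). norm (a k \<sigma>) \<le> M k) (at_top \<times>\<^sub>F at_top)"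
  proof -
    have "norm (a k \<sigma>) \<le> M k" if "\<sigma> \<ge> \<sigma>1" for k \<sigma>
    proof (cases "k = 0 \<or> k < N")
      case True
      then have "a k \<sigma> = 0" using low N by (auto simp: aeq)
      then show ?thesis by (simp add: M_def)
    next
      case False
      then have "norm (a k \<sigma>) = norm (F k) * (real k powr (-\<sigma>) * real N powr \<sigma>)"
        by (simp add: aeq norm_mult)
      also have "\<dots> \<le> norm (F k) * (real N powr \<sigma>1 * real k powr (-\<sigma>1))"
        by (intro mult_left_mono t2) (use False N that in auto)
      finally show ?thesis by (simp add: M_def mult_ac)
    qed
    then have B: "\<And>k \<sigma>. \<sigma> \<ge> \<sigma>1 \<Longrightarrow> norm (a k \<sigma>) \<le> M k" by blast
    show ?thesis unfolding eventually_prod_filter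
    proof (intro exI conjI allI impI)
      show "eventually (\<lambda>k::nat. True) at_top" by simp
      show "eventually (\<lambda>\<sigma>. \<sigma> \<ge> \<sigma>1) at_top" by (rule eventually_ge_at_top)
      fix k :: nat and \<sigma> :: real assume "True" "\<sigma> \<ge> \<sigma>1"
      then show "case (k, \<sigma>) of (k, \<sigma>) \<Rightarrow> norm (a k \<sigma>) \<le> M k" using B by simp
    qed
  qed
  have sM: "summable M" unfolding M_def by (intro summable_mult summ)
  have T: "((\<lambda>\<sigma>. suminf (\<lambda>k. a k \<sigma>)) \<longlongrightarrow> suminf (\<lambda>k. if k = N then F N else 0)) at_top"
    using tannerys_theorem[OF lim bound sM] by simp
  have "suminf (\<lambda>k. if k = N then F N else 0) = F N"
    using sums_single[of N "\<lambda>_. F N"] by (simp add: sums_iff)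
  moreover have "eventually (\<lambda>\<sigma>. suminf (\<lambda>k. a k \<sigma>) = dir_eval F (of_real \<sigma>) * of_nat N powr (of_real \<sigma>)) at_top"
  proof -
    have "suminf (\<lambda>k. a k \<sigma>) = dir_eval F (of_real \<sigma>) * of_nat N powr (of_real \<sigma>)" if "\<sigma> \<ge> \<sigma>1" for \<sigma>
    proof -
      have "summable (\<lambda>k. norm (dir_term F (of_real \<sigma>) k))"
      proof (rule summable_comparison_test[OF _ summ])
        show "\<exists>N. \<forall>n\<ge>N. norm (norm (dir_term F (complex_of_real \<sigma>) n)) \<le> norm (F n) * real n powr - \<sigma>1"
        proof (intro exI[of _ 1] allI impI)
          fix n :: nat assume "n \<ge> 1"
          then have "real n powr (-\<sigma>) \<le> real n powr (-\<sigma>1)" using that by (simp add: powr_mono)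
          then show "norm (norm (dir_term F (complex_of_real \<sigma>) n)) \<le> norm (F n) * real n powr - \<sigma>1"
            by (simp add: dir_term_def norm_mult npow_real mult_left_mono)
        qed
      qed
      then have "summable (dir_term F (of_real \<sigma>))" by (rule summable_norm_cancel)
      then show ?thesis unfolding a_def dir_eval_def by (simp add: suminf_mult2)
    qed
    then show ?thesis by (auto simp: eventually_at_top_linorder)
  qed
  ultimately show ?thesis using T by (simp add: tendsto_cong)
qed

lemma lead_coeff:
  fixes F :: "nat \<Rightarrow> complex"
  assumes summ: "summable (\<lambda>n. norm (F n) * real n powr (-\<sigma>1))" and s1: "\<sigma>1 \<ge> 0" and N: "N \<ge> 1"
    and lim: "((\<lambda>\<sigma>::real. dir_eval F (of_real \<sigma>) * of_nat N powr (of_real \<sigma>)) \<longlongrightarrow> L) at_top"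
  shows "(\<forall>j. 1 \<le> j \<longrightarrow> j < N \<longrightarrow> F j = 0) \<and> F N = L"
proof -
  have low: "\<forall>i. 1 \<le> i \<longrightarrow> i < j \<longrightarrow> F i = 0" if "j \<le> N" for j
    using that
  proof (induction j)
    case 0 then show ?case by auto
  next
    case (Suc j)
    then have IH: "\<And>i. 1 \<le> i \<Longrightarrow> i < j \<Longrightarrow> F i = 0" by auto
    have "F j = 0" if j1: "j \<ge> 1"
    proof -
      have A: "((\<lambda>\<sigma>::real. dir_eval F (of_real \<sigma>) * of_nat j powr (of_real \<sigma>)) \<longlongrightarrow> F j) at_top"
        by (rule lead_lim[OF summ s1 j1 IH])
      have eq: "dir_eval F (of_real \<sigma>) * of_nat j powr (of_real \<sigma>) =
          (dir_eval F (of_real \<sigma>) * of_nat N powr (of_real \<sigma>)) * of_real ((real j / real N) powr \<sigma>)" for \<sigma>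
      proof -
        have "real N powr \<sigma> > 0" using N by simp
        then have "real j powr \<sigma> = real N powr \<sigma> * (real j / real N) powr \<sigma>"
          by (simp add: powr_divide)
        then show ?thesis by (simp add: npow_real')
      qed
      have "((\<lambda>\<sigma>. (real j / real N) powr \<sigma>) \<longlongrightarrow> 0) at_top"
        by (rule t1) (use Suc.prems j1 in auto)
      then have "((\<lambda>\<sigma>::real. (dir_eval F (of_real \<sigma>) * of_nat N powr (of_real \<sigma>)) * of_real ((real j / real N) powr \<sigma>)) \<longlongrightarrow> L * of_real 0) at_top"
        by (intro tendsto_intros lim)
      then have B: "((\<lambda>\<sigma>::real. dir_eval F (of_real \<sigma>) * of_nat j powr (of_real \<sigma>)) \<longlongrightarrow> 0) at_top"
        by (simp add: eq)
      show ?thesis using tendsto_unique[OF _ A B] by simp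
    qed
    then show ?case using IH by (auto simp: less_Suc_eq)
  qed
  then have lowN: "\<And>j. 1 \<le> j \<Longrightarrow> j < N \<Longrightarrow> F j = 0" by auto
  have "F N = L" using tendsto_unique[OF _ lead_lim[OF summ s1 N lowN] lim] by simp
  then show ?thesis using lowN by auto
qed

definition dsumm :: "(nat \<Rightarrow> complex) \<Rightarrow> bool" where
  "dsumm a \<longleftrightarrow> summable (\<lambda>n. norm (a n))"

lemma summ0: assumes "dsumm F" "\<sigma>1 \<ge> 0" shows "summable (\<lambda>n. norm (F n) * real n powr (-\<sigma>1))"
proof (rule summable_comparison_test[OF _ assms(1)[unfolded dsumm_def]])
  show "\<exists>N. \<forall>n\<ge>N. norm (norm (F n) * real n powr - \<sigma>1) \<le> norm (F n)"
  proof (intro exI[of _ 1] allI impI)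
    fix n :: nat assume "n \<ge> 1"
    then have "real n powr (-\<sigma>1) \<le> 1" using assms(2) by (simp add: powr_le_one_le ge_one_powr_ge_zero powr_minus_divide)
    then show "norm (norm (F n) * real n powr - \<sigma>1) \<le> norm (F n)"
      by (simp add: abs_mult mult_left_le)
  qed
qed

lemma dt_norm_le: "Re s \<ge> 0 \<Longrightarrow> norm (dir_term a s n) \<le> norm (a n)"
proof -
  assume "Re s \<ge> 0"
  then have "real n powr (- Re s) \<le> 1"
    by (cases "n = 0") (auto simp: powr_minus_divide ge_one_powr_ge_zero)
  then show ?thesis by (simp add: dir_term_def norm_mult norm_npow mult_left_le)
qed

lemma de_sums: assumes "dsumm a" "Re s \<ge> 0" shows "dir_term a s sums dir_eval a s"
proof -
  have "summable (\<lambda>n. norm (dir_term a s n))"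
  proof (rule summable_comparison_test[OF _ assms(1)[unfolded dsumm_def]])
    show "\<exists>N. \<forall>n\<ge>N. norm (norm (dir_term a s n)) \<le> norm (a n)"
      using dt_norm_le[OF assms(2)] by simp
  qed
  then have "summable (dir_term a s)" by (rule summable_norm_cancel)
  then show ?thesis unfolding dir_eval_def by (rule summable_sums)
qed

lemma dsumm_add: "dsumm a \<Longrightarrow> dsumm b \<Longrightarrow> dsumm (\<lambda>n. a n + b n)"
  unfolding dsumm_def
  by (rule summable_comparison_test[of _ "\<lambda>n. norm (a n) + norm (b n)"]) (auto intro: summable_add norm_triangle_ineq)

lemma dsumm_scale: "dsumm a \<Longrightarrow> dsumm (\<lambda>n. c * a n)"
  unfolding dsumm_def by (simp add: norm_mult summable_mult)

lemma dsumm_diff: "dsumm a \<Longrightarrow> dsumm b \<Longrightarrow> dsumm (\<lambda>n. a n - b n)"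
  using dsumm_add[of a "\<lambda>n. (-1) * b n"] dsumm_scale[of b "-1"] by simp

lemma dsumm_sum: "finite I \<Longrightarrow> (\<And>i. i \<in> I \<Longrightarrow> dsumm (f i)) \<Longrightarrow> dsumm (\<lambda>n. \<Sum>i\<in>I. f i n)"
proof (induction I rule: finite_induct)
  case empty then show ?case by (simp add: dsumm_def)
next
  case (insert x F)
  then have "dsumm (\<lambda>n. f x n + (\<Sum>i\<in>F. f i n))" by (intro dsumm_add) auto
  then show ?case using insert by simp
qed

lemma de_add: assumes "dsumm a" "dsumm b" "Re s \<ge> 0"
  shows "dir_eval (\<lambda>n. a n + b n) s = dir_eval a s + dir_eval b s"
proof -
  have "(\<lambda>n. dir_term a s n + dir_term b s n) sums (dir_eval a s + dir_eval b s)"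
    using assms by (intro sums_add de_sums)
  moreover have "dir_term (\<lambda>n. a n + b n) s = (\<lambda>n. dir_term a s n + dir_term b s n)"
    by (simp add: fun_eq_iff dir_term_def distrib_right)
  ultimately show ?thesis using de_sums[OF dsumm_add[OF assms(1,2)] assms(3)] by (metis sums_unique2)
qed

lemma de_scale: assumes "dsumm a" "Re s \<ge> 0"
  shows "dir_eval (\<lambda>n. c * a n) s = c * dir_eval a s"
proof -
  have "(\<lambda>n. c * dir_term a s n) sums (c * dir_eval a s)"
    using assms by (intro sums_mult de_sums)
  moreover have "dir_term (\<lambda>n. c * a n) s = (\<lambda>n. c * dir_term a s n)"
    by (simp add: fun_eq_iff dir_term_def mult.assoc)
  ultimately show ?thesis using de_sums[OF dsumm_scale[OF assms(1)] assms(2)] by (metis sums_unique2)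
qed

lemma de_diff: assumes "dsumm a" "dsumm b" "Re s \<ge> 0"
  shows "dir_eval (\<lambda>n. a n - b n) s = dir_eval a s - dir_eval b s"
proof -
  have "(\<lambda>n. dir_term a s n - dir_term b s n) sums (dir_eval a s - dir_eval b s)"
    using assms by (intro sums_diff de_sums)
  moreover have "dir_term (\<lambda>n. a n - b n) s = (\<lambda>n. dir_term a s n - dir_term b s n)"
    by (simp add: fun_eq_iff dir_term_def left_diff_distrib)
  ultimately show ?thesis using de_sums[OF dsumm_diff[OF assms(1,2)] assms(3)] by (metis sums_unique2)
qed

lemma de_sum: "finite I \<Longrightarrow> (\<And>i. i \<in> I \<Longrightarrow> dsumm (f i)) \<Longrightarrow> Re s \<ge> 0 \<Longrightarrow>
   dir_eval (\<lambda>n. \<Sum>i\<in>I. f i n) s = (\<Sum>i\<in>I. dir_eval (f i) s)"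
proof (induction I rule: finite_induct)
  case empty then show ?case by (simp add: dir_eval_def dir_term_def)
next
  case (insert x F)
  have "dir_eval (\<lambda>n. \<Sum>i\<in>insert x F. f i n) s = dir_eval (\<lambda>n. f x n + (\<Sum>i\<in>F. f i n)) s"
    using insert by simp
  also have "\<dots> = dir_eval (f x) s + dir_eval (\<lambda>n. \<Sum>i\<in>F. f i n) s"
    by (rule de_add) (use insert in \<open>auto intro: dsumm_sum\<close>)
  finally show ?case using insert by simp
qed

lemma uniq:
  assumes "dsumm a" "dsumm b" "\<And>\<sigma>::real. \<sigma> > 0 \<Longrightarrow> dir_eval a (of_real \<sigma>) = dir_eval b (of_real \<sigma>)" "n \<ge> 1"
  shows "a n = b n"
proof -
  define F where "F n = a n - b n" for n
  have dF: "dsumm F" unfolding F_def using assms by (intro dsumm_diff)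
  have ev: "eventually (\<lambda>\<sigma>::real. 0 = dir_eval F (of_real \<sigma>) * of_nat n powr (of_real \<sigma>)) at_top"
  proof -
    have "dir_eval F (of_real \<sigma>) = 0" if "\<sigma> > 0" for \<sigma>
      unfolding F_def using that assms by (subst de_diff) auto
    then show ?thesis unfolding eventually_at_top_dense by auto
  qed
  have "((\<lambda>\<sigma>::real. dir_eval F (of_real \<sigma>) * of_nat n powr (of_real \<sigma>)) \<longlongrightarrow> 0) at_top"
    by (rule Lim_transform_eventually[OF tendsto_const ev])
  from lead_coeff[OF summ0[OF dF order_refl] order_refl assms(4) this] show ?thesis
    by (simp add: F_def)
qed

lemma smooth_mult: "smooth k a \<Longrightarrow> smooth k b \<Longrightarrow> smooth k (a * b)"
  unfolding smooth_def
  by (auto simp: in_prime_factors_iff prime_dvd_mult_iff subset_iff)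

lemma smooth_one: "smooth k 1"
  by (simp add: smooth_def)

lemma smooth_power: "smooth k a \<Longrightarrow> smooth k (a ^ m)"
proof (induction m)
  case 0 then show ?case by (simp add: smooth_def)
next
  case (Suc m) then show ?case by (simp add: smooth_mult)
qed

lemma smooth_two: "k \<ge> 1 \<Longrightarrow> smooth k 2"
proof -
  assume k: "k \<ge> 1"
  have "{q::nat. prime q \<and> q \<le> 2} = {2}"
    using prime_ge_2_nat by (auto intro: antisym)
  then have "2 \<in> first_primes k" using k by (simp add: first_primes_def)
  moreover have "p = 2" if "prime p" "p dvd (2::nat)" for p
    using that prime_nat_iff[of 2] by auto
  ultimately show ?thesis by (auto simp: smooth_def prime_factors_dvd)
qed

definition ee :: "nat \<Rightarrow> nat \<Rightarrow> complex" where
  "ee n = (\<lambda>j. if j = n then 1 else 0)"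

lemma dsumm_ee: "dsumm (ee n)"
  unfolding dsumm_def ee_def
  using summable_single[of n "\<lambda>_. 1::real"] by (simp add: if_distrib cong: if_cong)

lemma de_ee: "dir_eval (ee n) s = of_nat n powr (-s)"
proof -
  have "dir_term (ee n) s = (\<lambda>j. if j = n then of_nat n powr (-s) else 0)"
    by (auto simp: fun_eq_iff dir_term_def ee_def)
  then show ?thesis using sums_single[of n "\<lambda>_. of_nat n powr (-s)"]
    by (simp add: dir_eval_def sums_iff)
qed

lemma Anorm_ee: "Anorm (ee n) = 1"
proof -
  have "(\<lambda>j. norm (ee n j)) = (\<lambda>j. if j = n then 1 else 0)"
    by (auto simp: fun_eq_iff ee_def)
  then show ?thesis using sums_single[of n "\<lambda>_. 1::real"] by (simp add: Anorm_def sums_iff)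
qed

lemma ee_Ak: "smooth k n \<Longrightarrow> ee n \<in> Ak k"
  using dsumm_ee[of n] by (auto simp: Ak_def ee_def dsumm_def)

lemma Ak_dsumm: "a \<in> Ak k \<Longrightarrow> dsumm a"
  by (simp add: Ak_def dsumm_def)

lemma Ak_zero: "a \<in> Ak k \<Longrightarrow> a 0 = 0"
  by (auto simp: Ak_def smooth_def)

lemma poly_binom_zero:
  fixes y :: "nat \<Rightarrow> complex"
  assumes "\<And>m. m \<ge> M \<Longrightarrow> (\<Sum>i\<le>c. of_nat (m choose i) * y i) = 0"
  shows "\<forall>i\<le>c. y i = 0"
  using assms
proof (induction c arbitrary: y)
  case 0
  then show ?case using 0[of M] by simp
next
  case (Suc c)
  have P: "(\<Sum>i\<le>Suc c. of_nat (m choose i) * y i) = y 0 + (\<Sum>i\<le>c. of_nat (m choose Suc i) * y (Suc i))" for m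
    by (simp add: sum.atMost_Suc_shift del: sum.atMost_Suc)
  have P': "(\<Sum>i\<le>Suc c. of_nat (Suc m choose i) * y i) =
       y 0 + (\<Sum>i\<le>c. of_nat (m choose i) * y (Suc i)) + (\<Sum>i\<le>c. of_nat (m choose Suc i) * y (Suc i))" for m
    by (simp add: sum.atMost_Suc_shift sum.distrib ring_distribs del: sum.atMost_Suc)
  have "(\<Sum>i\<le>c. of_nat (m choose i) * y (Suc i)) = 0" if "m \<ge> M" for m
  proof -
    define S1 where "S1 = (\<Sum>i\<le>c. of_nat (m choose i) * y (Suc i))"
    define S2 where "S2 = (\<Sum>i\<le>c. of_nat (m choose Suc i) * y (Suc i))"
    have A: "y 0 + S2 = 0" using Suc.prems[of m] that unfolding P S2_def by simp
    have B: "y 0 + (S1 + S2) = 0" using Suc.prems[of "Suc m"] that unfolding P S1_def S2_def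
      by (simp add: sum.distrib distrib_right)
    have "S1 = (y 0 + (S1 + S2)) - (y 0 + S2)" by (simp add: algebra_simps)
    also have "\<dots> = 0" unfolding A B by simp
    finally show ?thesis by (simp add: S1_def)
  qed
  then have "\<forall>i\<le>c. y (Suc i) = 0" by (intro Suc.IH) auto
  moreover have "y 0 = 0" using Suc.prems[of M] calculation unfolding P by simp
  ultimately show ?case by (metis Suc_le_mono not0_implies_Suc)
qed

lemma npexp: "n \<ge> 1 \<Longrightarrow> (of_nat n :: complex) powr z = exp (z * of_real (ln (real n)))"
  by (simp add: powr_def)

lemma npow_mult: "(of_nat (a * b) :: complex) powr z = of_nat a powr z * of_nat b powr z"
proof (cases "a = 0 \<or> b = 0")
  case True then show ?thesis by auto
next
  case False
  then have ab: "a * b \<ge> 1" and a: "a \<ge> 1" and b: "b \<ge> 1" by auto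
  have "(of_nat (a*b)::complex) powr z = exp (z * of_real (ln (real (a*b))))" using ab by (rule npexp)
  also have "\<dots> = exp (z * of_real (ln (real a))) * exp (z * of_real (ln (real b)))"
    using False by (simp add: ln_mult exp_add[symmetric] distrib_left)
  also have "\<dots> = of_nat a powr z * of_nat b powr z" by (simp only: npexp[OF a] npexp[OF b])
  finally show ?thesis .
qed

definition shift :: "nat \<Rightarrow> (nat \<Rightarrow> complex) \<Rightarrow> nat \<Rightarrow> complex" where
  "shift Q F N = (if Q dvd N then F (N div Q) else 0)"

lemma shift_at: "Q \<ge> 1 \<Longrightarrow> shift Q F (Q * n) = F n"
  by (simp add: shift_def)

lemma smono_mult: "Q \<ge> 1 \<Longrightarrow> strict_mono (\<lambda>n::nat. Q * n)"
  by (simp add: strict_mono_def)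

lemma dsumm_shift: assumes "Q \<ge> 1" "dsumm F" shows "dsumm (shift Q F)"
proof -
  have "(\<lambda>n. norm (F n)) sums (\<Sum>n. norm (F n))" using assms(2) by (simp add: dsumm_def summable_sums)
  then have "(\<lambda>n. norm (shift Q F (Q * n))) sums (\<Sum>n. norm (F n))" using assms by (simp add: shift_at)
  then have "(\<lambda>N. norm (shift Q F N)) sums (\<Sum>n. norm (F n))"
    by (subst (asm) sums_mono_reindex[OF smono_mult[OF assms(1)]]) (auto simp: shift_def)
  then show ?thesis by (auto simp: dsumm_def sums_iff)
qed

lemma de_shift: assumes "Q \<ge> 1" "dsumm F" "Re s \<ge> 0"
  shows "dir_eval (shift Q F) s = of_nat Q powr (-s) * dir_eval F s"
proof -
  have "(\<lambda>n. of_nat Q powr (-s) * dir_term F s n) sums (of_nat Q powr (-s) * dir_eval F s)"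
    by (intro sums_mult de_sums assms)
  moreover have "(\<lambda>n. dir_term (shift Q F) s (Q * n)) = (\<lambda>n. of_nat Q powr (-s) * dir_term F s n)"
    by (rule ext, unfold dir_term_def shift_at[OF assms(1)] npow_mult, simp add: mult_ac)
  ultimately have "(\<lambda>n. dir_term (shift Q F) s (Q * n)) sums (of_nat Q powr (-s) * dir_eval F s)"
    by simp
  then have "dir_term (shift Q F) s sums (of_nat Q powr (-s) * dir_eval F s)"
    by (subst (asm) sums_mono_reindex[OF smono_mult[OF assms(1)]]) (auto simp: shift_def dir_term_def)
  moreover have "dir_term (shift Q F) s sums dir_eval (shift Q F) s"
    by (intro de_sums dsumm_shift assms)
  ultimately show ?thesis by (metis sums_unique2)
qed

lemma cancel_pt:
  fixes u v :: complex
  assumes "u \<noteq> 0" "v \<noteq> 0"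
  shows "norm (u + (-(u / of_real (norm u)) * (of_real (norm v) / v)) * v) < norm u + norm v"
proof -
  have "(-(u / of_real (norm u)) * (of_real (norm v) / v)) * v = - (u * of_real (norm v / norm u))"
    using assms by (simp add: divide_inverse mult_ac)
  then have "u + (-(u / of_real (norm u)) * (of_real (norm v) / v)) * v = u * of_real (1 - norm v / norm u)"
    by (simp add: algebra_simps)
  also have "norm \<dots> = norm u * \<bar>1 - norm v / norm u\<bar>" by (simp only: norm_mult norm_of_real)
  also have "\<dots> = \<bar>norm u - norm v\<bar>" using assms by (simp add: field_simps abs_mult[symmetric])
  also have "\<dots> < norm u + norm v" unfolding abs_less_iff using assms by auto
  finally show ?thesis .
qed

lemma unimod: "u \<noteq> 0 \<Longrightarrow> v \<noteq> 0 \<Longrightarrow> norm (-(u / of_real (norm u)) * (of_real (norm v) / v) :: complex) = 1"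
  by (simp add: norm_mult norm_divide)

lemma disj:
  assumes iso: "comp_isometry k \<phi>" and phiC: "\<phi> ` C0 \<subseteq> C0"
    and n: "smooth k n" and n': "smooth k n'" and nn: "n \<noteq> n'"
    and b1: "b1 \<in> Ak k" "\<forall>s\<in>C0. dir_eval (ee n) (\<phi> s) = dir_eval b1 s"
    and b2: "b2 \<in> Ak k" "\<forall>s\<in>C0. dir_eval (ee n') (\<phi> s) = dir_eval b2 s"
  shows "b1 j = 0 \<or> b2 j = 0"
proof (rule ccontr)
  assume "\<not> (b1 j = 0 \<or> b2 j = 0)"
  then have u: "b1 j \<noteq> 0" and v: "b2 j \<noteq> 0" by auto
  define l where "l = -(b1 j / of_real (norm (b1 j))) * (of_real (norm (b2 j)) / b2 j)"
  have l1: "norm l = 1" unfolding l_def using unimod[OF u v] .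
  have A1: "Anorm b1 = 1" using iso b1 ee_Ak[OF n] Anorm_ee[of n] by (auto simp: comp_isometry_def)
  have A2: "Anorm b2 = 1" using iso b2 ee_Ak[OF n'] Anorm_ee[of n'] by (auto simp: comp_isometry_def)
  define a where "a i = ee n i + l * ee n' i" for i
  define b where "b i = b1 i + l * b2 i" for i
  have da: "dsumm a" unfolding a_def by (intro dsumm_add dsumm_scale dsumm_ee)
  have db: "dsumm b" unfolding b_def using b1 b2 by (intro dsumm_add dsumm_scale Ak_dsumm)
  have aA: "a \<in> Ak k" using da n n' by (auto simp: Ak_def dsumm_def a_def ee_def)
  have "smooth k i" if "b i \<noteq> 0" for i
  proof (cases "b1 i = 0")
    case True
    then have "b2 i \<noteq> 0" using that by (auto simp: b_def)
    then show ?thesis using b2(1) by (auto simp: Ak_def)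
  next
    case False
    then show ?thesis using b1(1) by (auto simp: Ak_def)
  qed
  then have bA: "b \<in> Ak k" using db by (auto simp: Ak_def dsumm_def)
  have eq: "\<forall>s\<in>C0. dir_eval a (\<phi> s) = dir_eval b s"
  proof
    fix s assume s: "s \<in> C0"
    then have "\<phi> s \<in> C0" using phiC by auto
    then have r: "Re (\<phi> s) \<ge> 0" "Re s \<ge> 0" using s by (auto simp: C0_def)
    have "dir_eval a (\<phi> s) = dir_eval (ee n) (\<phi> s) + l * dir_eval (ee n') (\<phi> s)"
      unfolding a_def using r by (simp add: de_add de_scale dsumm_ee dsumm_scale)
    also have "\<dots> = dir_eval b1 s + l * dir_eval b2 s" using b1 b2 s by simp
    also have "\<dots> = dir_eval b s"
      unfolding b_def using r b1(1) b2(1) by (simp add: de_add de_scale Ak_dsumm dsumm_scale)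
    finally show "dir_eval a (\<phi> s) = dir_eval b s" .
  qed
  have Ab: "Anorm b = Anorm a" using iso aA bA eq by (auto simp: comp_isometry_def)
  have "(\<lambda>i. norm (a i)) = (\<lambda>i. (if i = n then 1 else 0) + (if i = n' then 1 else 0))"
    using nn l1 by (auto simp: fun_eq_iff a_def ee_def)
  then have "Anorm a = 2"
    using sums_add[OF sums_single[of n "\<lambda>_. 1::real"] sums_single[of n' "\<lambda>_. 1::real"]]
    by (simp add: Anorm_def sums_iff)
  define g where "g i = norm (b1 i) + norm (b2 i) - norm (b i)" for i
  have sb1: "summable (\<lambda>i. norm (b1 i))" and sb2: "summable (\<lambda>i. norm (b2 i))"
    and sb: "summable (\<lambda>i. norm (b i))" using b1(1) b2(1) db by (auto simp: Ak_def dsumm_def)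
  have sg: "summable g" unfolding g_def by (intro summable_diff summable_add sb1 sb2 sb)
  have g0: "0 \<le> g i" for i
  proof -
    have "norm (b i) \<le> norm (b1 i) + norm (l * b2 i)" unfolding b_def by (rule norm_triangle_ineq)
    then show "0 \<le> g i" using l1 by (simp add: g_def norm_mult)
  qed
  have gj: "0 < g j" using cancel_pt[OF u v] by (simp add: g_def b_def l_def)
  have "0 < suminf g" by (rule suminf_pos2[OF sg g0 gj])
  also have "suminf g = Anorm b1 + Anorm b2 - Anorm b"
    unfolding g_def Anorm_def by (simp add: suminf_diff suminf_add sb1 sb2 sb summable_add)
  finally show False using A1 A2 Ab \<open>Anorm a = 2\<close> by simp
qed

lemma psi_lim:
  assumes "\<psi> \<in> Dk k" shows "\<exists>\<beta>. ((\<lambda>\<sigma>::real. \<psi> (of_real \<sigma>)) \<longlongrightarrow> \<beta>) at_top"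
proof -
  obtain b and \<sigma>0 :: real where sums: "\<And>s. Re s > \<sigma>0 \<Longrightarrow> dir_term b s sums \<psi> s"
    using assms by (auto simp: Dk_def)
  define \<sigma>' where "\<sigma>' = max \<sigma>0 0 + 1"
  have "summable (dir_term b (of_real \<sigma>'))" using sums[of "of_real \<sigma>'"] by (auto simp: \<sigma>'_def sums_iff)
  then have "dir_term b (of_real \<sigma>') \<longlonglongrightarrow> 0" by (rule summable_LIMSEQ_zero)
  then have "Bseq (dir_term b (of_real \<sigma>'))" by (intro convergent_imp_Bseq) (auto simp: convergent_def)
  then obtain K where K: "K > 0" "\<And>n. norm (dir_term b (of_real \<sigma>') n) \<le> K" by (auto elim: BseqE)
  have summ: "summable (\<lambda>n. norm (b n) * real n powr (-(\<sigma>' + 2)))"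
  proof (rule summable_comparison_test[of _ "\<lambda>n. K * real n powr (-2)"])
    show "summable (\<lambda>n. K * real n powr (-2))" by (intro summable_mult) (simp add: summable_real_powr_iff)
    show "\<exists>N. \<forall>n\<ge>N. norm (norm (b n) * real n powr - (\<sigma>' + 2)) \<le> K * real n powr - 2"
    proof (intro exI[of _ 1] allI impI)
      fix n :: nat assume n: "n \<ge> 1"
      have e: "real n powr (-(\<sigma>'+2)) = real n powr (-\<sigma>') * real n powr (-2)"
        by (simp add: powr_add[symmetric])
      have "norm (b n) * real n powr (-\<sigma>') \<le> K"
        using K(2)[of n] by (simp add: dir_term_def norm_mult npow_real)
      then have "norm (b n) * real n powr (-\<sigma>') * real n powr (-2) \<le> K * real n powr (-2)"
        by (rule mult_right_mono) simp
      then show "norm (norm (b n) * real n powr - (\<sigma>' + 2)) \<le> K * real n powr - 2"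
        unfolding e by (simp add: mult_ac)
    qed
  qed
  have L: "((\<lambda>\<sigma>::real. dir_eval b (of_real \<sigma>) * of_nat 1 powr (of_real \<sigma>)) \<longlongrightarrow> b 1) at_top"
    by (rule lead_lim[OF summ]) (auto simp: \<sigma>'_def)
  have "eventually (\<lambda>\<sigma>::real. dir_eval b (of_real \<sigma>) * of_nat 1 powr (of_real \<sigma>) = \<psi> (of_real \<sigma>)) at_top"
  proof -
    have "dir_eval b (of_real \<sigma>) * of_nat 1 powr (of_real \<sigma>) = \<psi> (of_real \<sigma>)" if "\<sigma> > \<sigma>0" for \<sigma>
      using sums[of "of_real \<sigma>"] that by (simp add: dir_eval_def sums_iff)
    then show ?thesis unfolding eventually_at_top_dense by auto
  qed
  then show ?thesis using L by (auto intro: Lim_transform_eventually)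
qed

lemma npow_nz: "n \<ge> 1 \<Longrightarrow> (of_nat n :: complex) powr z \<noteq> 0"
  by (simp add: npexp)

lemma npow_pow: "(of_nat (n ^ m) :: complex) powr z = (of_nat n powr z) ^ m"
proof (induction m)
  case 0 then show ?case by (simp add: powr_def)
next
  case (Suc m)
  have "(of_nat (n ^ Suc m) :: complex) powr z = of_nat (n * n ^ m) powr z" by simp
  also have "\<dots> = of_nat n powr z * of_nat (n ^ m) powr z" by (rule npow_mult)
  finally show ?case using Suc by simp
qed

lemma npow_add: "n \<ge> 1 \<Longrightarrow> (of_nat n :: complex) powr (z + w) = of_nat n powr z * of_nat n powr w"
  by (simp add: npexp distrib_right exp_add)

lemma npow_c: "n \<ge> 1 \<Longrightarrow> (of_nat n :: complex) powr (of_nat c * z) = (of_nat n powr z) ^ c"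
proof -
  assume n: "n \<ge> 1"
  have "(of_nat n :: complex) powr (of_nat c * z) = exp (of_nat c * (z * of_real (ln (real n))))"
    using n by (simp add: npexp mult_ac)
  also have "\<dots> = (exp (z * of_real (ln (real n)))) ^ c" by (simp add: exp_of_nat_mult)
  finally show ?thesis using n by (simp add: npexp)
qed

lemma minus_pow: "(- a :: complex)^n * b^n = (-(a*b))^n"
  by (simp add: power_mult_distrib[symmetric])

lemma two_pow: "(2::complex) powr z = exp (z * of_real (ln 2))"
  using npexp[of 2 z] by simp

lemma C0_real: "\<sigma> > 0 \<Longrightarrow> of_real \<sigma> \<in> C0"
  by (simp add: C0_def)

lemma lead_T:
  assumes psi: "((\<lambda>\<sigma>::real. \<psi> (of_real \<sigma>)) \<longlongrightarrow> \<beta>) at_top"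
    and phi: "\<phi> = (\<lambda>s. of_nat c0 * s + \<psi> s)"
    and b: "b \<in> Ak k" "\<forall>s\<in>C0. dir_eval (ee n) (\<phi> s) = dir_eval b s" and n: "n \<ge> 1"
  shows "(\<forall>j. 1 \<le> j \<longrightarrow> j < n^c0 \<longrightarrow> b j = 0) \<and> b (n^c0) = of_nat n powr (-\<beta>)"
proof (rule lead_coeff[OF summ0[OF Ak_dsumm[OF b(1)] order_refl] order_refl])
  show "n ^ c0 \<ge> 1" using n by simp
  have ev: "eventually (\<lambda>\<sigma>::real. of_nat n powr (-\<psi> (of_real \<sigma>)) = dir_eval b (of_real \<sigma>) * of_nat (n^c0) powr (of_real \<sigma>)) at_top"
  proof -
    have "of_nat n powr (-\<psi> (of_real \<sigma>)) = dir_eval b (of_real \<sigma>) * of_nat (n^c0) powr (of_real \<sigma>)" if "\<sigma> > 0" for \<sigma>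
    proof -
      have "dir_eval b (of_real \<sigma>) = of_nat n powr (- (of_nat c0 * of_real \<sigma> + \<psi> (of_real \<sigma>)))"
        using b(2) C0_real[OF that] by (simp add: phi de_ee)
      also have "\<dots> = of_nat n powr (of_nat c0 * (- of_real \<sigma>)) * of_nat n powr (- \<psi> (of_real \<sigma>))"
        using n by (simp add: npow_add[symmetric])
      also have "\<dots> = (of_nat n powr (- of_real \<sigma>)) ^ c0 * of_nat n powr (- \<psi> (of_real \<sigma>))"
        using npow_c[OF n, of c0 "- of_real \<sigma>"] by simp
      finally have D: "dir_eval b (of_real \<sigma>) = (of_nat n powr (- of_real \<sigma>)) ^ c0 * of_nat n powr (- \<psi> (of_real \<sigma>))" .
      have "dir_eval b (of_real \<sigma>) * of_nat (n^c0) powr (of_real \<sigma>) =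
         (of_nat n powr (- of_real \<sigma>) * of_nat n powr (of_real \<sigma>)) ^ c0 * of_nat n powr (- \<psi> (of_real \<sigma>))"
        unfolding D npow_pow by (simp add: power_mult_distrib mult_ac)
      also have "of_nat n powr (- of_real \<sigma>) * of_nat n powr (of_real \<sigma>) = (1::complex)"
        using n by (simp add: npexp exp_minus field_simps)
      finally show ?thesis by simp
    qed
    then show ?thesis unfolding eventually_at_top_dense by auto
  qed
  have "((\<lambda>\<sigma>::real. exp (-\<psi> (of_real \<sigma>) * of_real (ln (real n)))) \<longlongrightarrow> exp (-\<beta> * of_real (ln (real n)))) at_top"
    by (intro tendsto_intros psi)
  then have "((\<lambda>\<sigma>::real. of_nat n powr (-\<psi> (of_real \<sigma>))) \<longlongrightarrow> of_nat n powr (-\<beta>)) at_top"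
    using n by (simp add: npexp)
  then show "((\<lambda>\<sigma>::real. dir_eval b (of_real \<sigma>) * of_nat (n^c0) powr (of_real \<sigma>)) \<longlongrightarrow> of_nat n powr (-\<beta>)) at_top"
    using ev by (rule Lim_transform_eventually)
qed

lemma backward:
  assumes c0: "c0 \<ge> 1" and phi: "\<forall>s\<in>C0. \<phi> s = of_nat c0 * s + \<i> * of_real \<tau>"
  shows "comp_isometry k \<phi>"
  unfolding comp_isometry_def
proof (intro ballI impI)
  fix a b assume a: "a \<in> Ak k" and b: "b \<in> Ak k" and eq: "\<forall>s\<in>C0. dir_eval a (\<phi> s) = dir_eval b s"
  define g where "g n = n ^ c0" for n :: nat
  have sm: "strict_mono g" unfolding g_def strict_mono_def using c0 by (auto intro: power_strict_mono)
  have inj: "inj g" using sm by (rule strict_mono_imp_inj_on)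
  define z where "z = -(\<i> * of_real \<tau>)"
  define a' where "a' N = (if N \<in> range g then a (inv g N) * of_nat (inv g N) powr z else 0)" for N
  have a'g: "a' (g n) = a n * of_nat n powr z" for n using inj by (simp add: a'_def)
  have a0: "a 0 = 0" using a by (rule Ak_zero)
  have norms: "norm (a' (g n)) = norm (a n)" for n
  proof (cases "n = 0")
    case True then show ?thesis using a0 by (simp add: a'g)
  next
    case False then show ?thesis by (simp add: a'g norm_mult norm_npow z_def)
  qed
  have "(\<lambda>n. norm (a n)) sums Anorm a" using a by (simp add: Ak_def Anorm_def summable_sums)
  then have "(\<lambda>n. norm (a' (g n))) sums Anorm a" by (simp add: norms)
  then have sa': "(\<lambda>N. norm (a' N)) sums Anorm a"
    by (subst (asm) sums_mono_reindex[OF sm]) (auto simp: a'_def)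
  then have da': "dsumm a'" and Aa': "Anorm a' = Anorm a" by (auto simp: dsumm_def Anorm_def sums_iff)
  have ev: "dir_eval a' s = dir_eval b s" if s: "s \<in> C0" for s
  proof -
    have "Re (\<phi> s) \<ge> 0" using phi s c0 by (auto simp: C0_def)
    then have S: "dir_term a (\<phi> s) sums dir_eval a (\<phi> s)" using a by (intro de_sums Ak_dsumm)
    have "(\<lambda>n. dir_term a' s (g n)) = dir_term a (\<phi> s)"
    proof
      fix n
      show "dir_term a' s (g n) = dir_term a (\<phi> s) n"
      proof (cases "n = 0")
        case True then show ?thesis using a0 c0 by (simp add: dir_term_def a'g g_def)
      next
        case False
        then have n: "n \<ge> 1" by simp
        have "of_nat n powr (- \<phi> s) = of_nat n powr (of_nat c0 * (- s) + z)"
          using phi s by (simp add: z_def algebra_simps)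
        also have "\<dots> = (of_nat n powr (-s)) ^ c0 * of_nat n powr z"
          by (simp only: npow_add[OF n] npow_c[OF n])
        finally have F: "of_nat n powr (- \<phi> s) = (of_nat n powr (-s)) ^ c0 * of_nat n powr z" .
        show ?thesis unfolding dir_term_def a'g g_def npow_pow F by (simp add: mult_ac a'g[unfolded g_def])
      qed
    qed
    with S have "(\<lambda>n. dir_term a' s (g n)) sums dir_eval a (\<phi> s)" by simp
    then have "dir_term a' s sums dir_eval a (\<phi> s)"
      by (subst (asm) sums_mono_reindex[OF sm]) (auto simp: a'_def dir_term_def)
    then show ?thesis using eq s by (simp add: dir_eval_def sums_iff)
  qed
  have "a' N = b N" for N
  proof (cases "N = 0")
    case True
    have "a' 0 = a' (g 0)" using c0 by (simp add: g_def power_0_left)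
    also have "\<dots> = 0" using a0 by (simp only: a'g) simp
    finally have "a' 0 = 0" .
    then show ?thesis using True Ak_zero[OF b] by simp
  next
    case False
    then show ?thesis using uniq[OF da' Ak_dsumm[OF b], of N] ev C0_real by auto
  qed
  then have "a' = b" by auto
  then show "Anorm b = Anorm a" using Aa' by simp
qed


lemma forward:
  assumes k: "k \<ge> 1" and psiD: "\<psi> \<in> Dk k" and phi: "\<phi> = (\<lambda>s. of_nat c0 * s + \<psi> s)"
    and phiC: "\<phi> ` C0 \<subseteq> C0" and maps: "comp_maps_into k \<phi>" and iso: "comp_isometry k \<phi>"
  shows "c0 \<ge> 1 \<and> (\<exists>\<tau>::real. \<forall>s\<in>C0. \<phi> s = of_nat c0 * s + \<i> * of_real \<tau>)"
proof -
  obtain \<beta> where psiL: "((\<lambda>\<sigma>::real. \<psi> (of_real \<sigma>)) \<longlongrightarrow> \<beta>) at_top"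
    using psi_lim[OF psiD] by blast
  define T where "T n = (SOME b. b \<in> Ak k \<and> (\<forall>s\<in>C0. dir_eval (ee n) (\<phi> s) = dir_eval b s))" for n
  have T: "T n \<in> Ak k \<and> (\<forall>s\<in>C0. dir_eval (ee n) (\<phi> s) = dir_eval (T n) s)" if "smooth k n" for n
  proof -
    have ex: "\<exists>b. b \<in> Ak k \<and> (\<forall>s\<in>C0. dir_eval (ee n) (\<phi> s) = dir_eval b s)"
      using maps ee_Ak[OF that] by (auto simp: comp_maps_into_def)
    show ?thesis using someI_ex[OF ex] unfolding T_def .
  qed
  have sm1: "n \<ge> 1" if "smooth k n" for n using that by (simp add: smooth_def)
  have LT: "(\<forall>j. 1 \<le> j \<longrightarrow> j < n^c0 \<longrightarrow> T n j = 0) \<and> T n (n^c0) = of_nat n powr (-\<beta>)" if "smooth k n" for n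
    using lead_T[OF psiL phi _ _ sm1[OF that]] T[OF that] by blast
  have DJ: "T n j = 0 \<or> T n' j = 0" if "smooth k n" "smooth k n'" "n \<noteq> n'" for n n' j
    using disj[OF iso phiC that] T[OF that(1)] T[OF that(2)] by blast
  have s2: "smooth k 2" using k by (rule smooth_two)
  have c0: "c0 \<ge> 1"
  proof (rule ccontr)
    assume "\<not> c0 \<ge> 1" then have "c0 = 0" by simp
    then have "T 1 1 \<noteq> 0" "T 2 1 \<noteq> 0" using LT[OF smooth_one] LT[OF s2] npow_nz[of 1] npow_nz[of 2] by auto
    then show False using DJ[OF smooth_one s2, of 1] by simp
  qed
  define q where "q = (2::nat) ^ c0"
  define B where "B = T 2"
  have q2: "q \<ge> 2" using c0 unfolding q_def
    by (metis One_nat_def Suc_1 le_add2 plus_1_eq_Suc power_increasing power_one_right zero_le_numeral)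
  have BA: "B \<in> Ak k" and Beq: "\<And>s. s \<in> C0 \<Longrightarrow> of_nat 2 powr (- \<phi> s) = dir_eval B s"
    using T[OF s2] by (auto simp: B_def de_ee)
  have dB: "dsumm B" using BA by (rule Ak_dsumm)
  have Blow: "B j = 0" if "j < q" for j
  proof (cases "j = 0")
    case True then show ?thesis using Ak_zero[OF BA] by simp
  next
    case False then show ?thesis using LT[OF s2] that by (auto simp: B_def q_def)
  qed
  have Bq: "B q = of_nat 2 powr (-\<beta>)" using LT[OF s2] by (simp add: B_def q_def)
  have Bqnz: "B q \<noteq> 0" unfolding Bq by (rule npow_nz) simp
  have AB: "Anorm B = 1" using iso BA T[OF s2] ee_Ak[OF s2] Anorm_ee[of 2] by (auto simp: comp_isometry_def B_def)
  show ?thesis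
  proof (cases "\<forall>j. j \<noteq> q \<longrightarrow> B j = 0")
    case True
    have nB: "(\<lambda>j. norm (B j)) = (\<lambda>j. if j = q then norm (B q) else 0)" using True by auto
    have "Anorm B = norm (B q)"
      unfolding Anorm_def nB using sums_single[of q "\<lambda>_. norm (B q)"] by (simp add: sums_iff)
    moreover have "norm (B q) = real 2 powr (- Re \<beta>)" unfolding Bq by (rule norm_npow)
    ultimately have "real 2 powr (- Re \<beta>) = 1" using AB by simp
    then have Reb: "Re \<beta> = 0" by simp
    define L where "L = complex_of_real (ln 2)"
    have intval: "\<exists>m::int. (\<psi> s - \<beta>) * L / (2 * of_real pi * \<i>) = of_int m" if s: "s \<in> C0" for s
    proof -
      have dt: "dir_term B s = (\<lambda>j. if j = q then B q * of_nat q powr (-s) else 0)"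
        using True by (auto simp: fun_eq_iff dir_term_def)
      have "dir_eval B s = B q * of_nat q powr (-s)"
        unfolding dir_eval_def dt using sums_single[of q "\<lambda>_. B q * of_nat q powr (-s)"] by (simp add: sums_iff)
      then have e1: "of_nat 2 powr (- \<phi> s) = B q * of_nat q powr (-s)"
        using Beq[OF s] by simp
      have qpow: "(of_nat q :: complex) powr (-s) = (of_nat 2 powr (-s))^c0" unfolding q_def by (rule npow_pow)
      note e2 = e1[unfolded qpow Bq]
      from e2 have "exp (- (of_nat c0 * s + \<psi> s) * L) = exp (-\<beta> * L) * exp (-s * L) ^ c0"
        by (simp add: two_pow phi L_def)
      also have "exp (-s * L) ^ c0 = exp (of_nat c0 * (-s * L))" by (rule exp_of_nat_mult[symmetric])
      finally have X: "exp (- (of_nat c0 * s + \<psi> s) * L) = exp (-\<beta> * L) * exp (of_nat c0 * (-s * L))" .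
      have "exp (- ((\<psi> s - \<beta>) * L)) = exp (- (of_nat c0 * s + \<psi> s) * L) * exp (\<beta> * L) * exp (of_nat c0 * (s * L))"
        by (simp add: exp_add[symmetric] algebra_simps)
      also have "\<dots> = (exp (-\<beta> * L) * exp (\<beta> * L)) * (exp (of_nat c0 * (-s * L)) * exp (of_nat c0 * (s * L)))"
        unfolding X by (simp add: mult_ac)
      also have "\<dots> = 1" by (simp add: exp_add[symmetric])
      finally have "exp (- ((\<psi> s - \<beta>) * L)) = 1" .
      then obtain m :: int where m: "Re (- ((\<psi> s - \<beta>) * L)) = 0" "Im (- ((\<psi> s - \<beta>) * L)) = of_int (2 * m) * pi"
        unfolding exp_eq_1 by blast
      then have "- ((\<psi> s - \<beta>) * L) = of_int (2 * m) * of_real pi * \<i>"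
        by (simp add: complex_eq_iff)
      then have "(\<psi> s - \<beta>) * L / (2 * of_real pi * \<i>) = of_int (- m)"
        by (simp add: field_simps)
      then show ?thesis by blast
    qed
    define h where "h s = (\<psi> s - \<beta>) * L / (2 * of_real pi * \<i>)" for s
    have conn: "connected C0" unfolding C0_def by (intro convex_connected convex_halfspace_Re_gt)
    have contpsi: "continuous_on C0 \<psi>" using psiD by (auto simp: Dk_def intro: holomorphic_on_imp_continuous_on)
    have pin: "2 * complex_of_real pi * \<i> \<noteq> 0" by (simp add: complex_eq_iff)
    have conth: "continuous_on C0 h" unfolding h_def by (intro continuous_intros contpsi) (use pin in auto)
    have "h constant_on C0"
    proof (rule continuous_discrete_range_constant[OF conn conth])
      fix x assume x: "x \<in> C0"
      show "\<exists>e>0. \<forall>y. y \<in> C0 \<and> h y \<noteq> h x \<longrightarrow> e \<le> norm (h y - h x)"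
      proof (intro exI[of _ 1] conjI allI impI)
        fix y assume y: "y \<in> C0 \<and> h y \<noteq> h x"
        obtain m1 :: int where m1: "h y = of_int m1" using intval y unfolding h_def by blast
        obtain m2 :: int where m2: "h x = of_int m2" using intval x unfolding h_def by blast
        have "m1 \<noteq> m2" using y m1 m2 by auto
        then have "1 \<le> \<bar>m1 - m2\<bar>" by simp
        have E: "h y - h x = of_int (m1 - m2)" by (simp add: m1 m2)
        have Z: "cmod (complex_of_int z) = \<bar>real_of_int z\<bar>" for z :: int
          by (metis norm_of_real of_real_of_int_eq)
        have "norm (h y - h x) = norm (complex_of_int (m1 - m2))" by (simp only: E)
        also have "\<dots> = \<bar>real_of_int (m1 - m2)\<bar>" by (rule Z)
        finally have "norm (h y - h x) = real_of_int \<bar>m1 - m2\<bar>" by simp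
        then show "1 \<le> norm (h y - h x)" using \<open>1 \<le> \<bar>m1 - m2\<bar>\<close> by simp
      next
        show "(0::real) < 1" by simp
      qed
    qed
    then obtain c where hc: "\<And>s. s \<in> C0 \<Longrightarrow> h s = c" unfolding constant_on_def by blast
    have "((\<lambda>\<sigma>::real. h (of_real \<sigma>)) \<longlongrightarrow> (\<beta> - \<beta>) * L / (2 * of_real pi * \<i>)) at_top"
      unfolding h_def by (intro tendsto_intros psiL) (use pin in auto)
    moreover have "eventually (\<lambda>\<sigma>::real. h (of_real \<sigma>) = c) at_top"
      using hc C0_real unfolding eventually_at_top_dense by blast
    ultimately have "((\<lambda>\<sigma>::real. c) \<longlongrightarrow> 0) at_top" by (simp add: tendsto_cong)
    then have c0': "c = 0" by (simp add: tendsto_const_iff)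
    have "\<psi> s = \<beta>" if "s \<in> C0" for s
    proof -
      have "h s = 0" using hc[OF that] c0' by simp
      moreover have "L \<noteq> 0" by (simp add: L_def)
      ultimately show ?thesis using pin by (simp add: h_def)
    qed
    moreover have "\<beta> = \<i> * of_real (Im \<beta>)" using Reb by (simp add: complex_eq_iff)
    ultimately show ?thesis using c0 by (auto simp: phi)
  next
    case False
    define r where "r = (LEAST j. j \<noteq> q \<and> B j \<noteq> 0)"
    have rex: "\<exists>j. j \<noteq> q \<and> B j \<noteq> 0" using False by auto
    have rprop: "r \<noteq> q \<and> B r \<noteq> 0" unfolding r_def by (rule LeastI_ex[OF rex])
    have rmin: "r \<le> j" if "j \<noteq> q" "B j \<noteq> 0" for j unfolding r_def by (rule Least_le) (use that in auto)
    have rq: "q < r"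
    proof -
      have "\<not> r < q" using rprop Blow by blast
      then show ?thesis using rprop by simp
    qed
    have Brnz: "B r \<noteq> 0" using rprop by simp
    have sr: "smooth k r" using BA Brnz by (auto simp: Ak_def)
    have r1: "r \<ge> 1" using rq q2 by simp
    define E where "E j = (if j = q then 0 else B j)" for j
    have dE: "dsumm E"
    proof -
      have "summable (\<lambda>j. norm (B j))" using dB by (simp add: dsumm_def)
      then show ?thesis unfolding dsumm_def
        by (rule summable_comparison_test[rotated]) (auto simp: E_def)
    qed
    have Elow: "E j = 0" if "1 \<le> j" "j < r" for j
    proof (cases "j = q")
      case True then show ?thesis by (simp add: E_def)
    next
      case False
      have "B j = 0" using rmin[OF False] that by force
      then show ?thesis by (simp add: E_def)
    qed
    have Er: "E r = B r" using rprop by (simp add: E_def)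
    have BE: "dir_eval B s = B q * of_nat q powr (-s) + dir_eval E s" if "Re s \<ge> 0" for s
    proof -
      have "B = (\<lambda>j. B q * ee q j + E j)" by (auto simp: fun_eq_iff E_def ee_def)
      then have "dir_eval B s = dir_eval (\<lambda>j. B q * ee q j + E j) s" by simp
      also have "\<dots> = B q * of_nat q powr (-s) + dir_eval E s"
        using that by (simp add: de_add de_scale dsumm_scale dsumm_ee dE de_ee)
      finally show ?thesis .
    qed
    have s2p: "smooth k (2^j)" for j using s2 by (rule smooth_power)
    have Tpow: "dir_eval (T (2^j)) s = (dir_eval B s)^j" if "s \<in> C0" for j s
    proof -
      have "dir_eval (T (2^j)) s = dir_eval (ee (2^j)) (\<phi> s)" using T[OF s2p] that by simp
      also have "\<dots> = (of_nat 2 powr (- \<phi> s))^j" by (simp only: de_ee npow_pow)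
      also have "\<dots> = (dir_eval B s)^j" using Beq[OF that] by simp
      finally show ?thesis .
    qed
    define Epow where "Epow i N = (\<Sum>j\<le>i. of_nat (i choose j) * (- B q)^(i-j) * shift (q^(i-j)) (T (2^j)) N)" for i N
    have qp1: "q^m \<ge> 1" for m using q2 by simp
    have dT: "dsumm (T (2^j))" for j using T[OF s2p] by (auto intro: Ak_dsumm)
    have dEpow: "dsumm (Epow i)" for i
      unfolding Epow_def by (intro dsumm_sum dsumm_scale dsumm_shift qp1 dT) auto
    have qpow: "(of_nat (q^m) :: complex) powr z = (of_nat q powr z)^m" for m z by (rule npow_pow)
    have EpowEv: "dir_eval (Epow i) s = (dir_eval E s)^i" if s: "s \<in> C0" for i s
    proof -
      have r0: "Re s \<ge> 0" using s by (simp add: C0_def)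
      have "dir_eval (Epow i) s = (\<Sum>j\<le>i. dir_eval (\<lambda>N. of_nat (i choose j) * (- B q)^(i-j) * shift (q^(i-j)) (T (2^j)) N) s)"
        unfolding Epow_def by (rule de_sum) (auto intro: dsumm_scale dsumm_shift qp1 dT r0)
      also have "\<dots> = (\<Sum>j\<le>i. of_nat (i choose j) * (- B q)^(i-j) * (of_nat (q^(i-j)) powr (-s) * dir_eval (T (2^j)) s))"
        by (intro sum.cong refl) (simp only: de_scale[OF dsumm_shift[OF qp1 dT] r0] de_shift[OF qp1 dT r0])
      also have "\<dots> = (\<Sum>j\<le>i. of_nat (i choose j) * (dir_eval B s)^j * ((- B q) * of_nat q powr (-s))^(i-j))"
        by (intro sum.cong refl) (unfold qpow Tpow[OF s], simp add: power_mult_distrib mult_ac minus_pow)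
      also have "\<dots> = (dir_eval B s + (- B q) * of_nat q powr (-s))^i"
        by (rule binomial_ring[symmetric])
      also have "\<dots> = (dir_eval E s)^i" using BE[OF r0] by simp
      finally show ?thesis .
    qed
    have Elim: "((\<lambda>\<sigma>::real. dir_eval E (of_real \<sigma>) * of_nat r powr (of_real \<sigma>)) \<longlongrightarrow> B r) at_top"
      using lead_lim[OF summ0[OF dE order_refl] order_refl r1 Elow] Er by simp
    have EpowLead: "(\<forall>j. 1 \<le> j \<longrightarrow> j < r^i \<longrightarrow> Epow i j = 0) \<and> Epow i (r^i) = (B r)^i" for i
    proof (rule lead_coeff[OF summ0[OF dEpow order_refl] order_refl])
      show "r^i \<ge> 1" using r1 by simp
      have ev: "eventually (\<lambda>\<sigma>::real. (dir_eval E (of_real \<sigma>) * of_nat r powr (of_real \<sigma>))^i = dir_eval (Epow i) (of_real \<sigma>) * of_nat (r^i) powr (of_real \<sigma>)) at_top"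
      proof -
        have "(dir_eval E (of_real \<sigma>) * of_nat r powr (of_real \<sigma>))^i = dir_eval (Epow i) (of_real \<sigma>) * of_nat (r^i) powr (of_real \<sigma>)" if "\<sigma> > 0" for \<sigma>
          unfolding npow_pow EpowEv[OF C0_real[OF that]] by (simp add: power_mult_distrib)
        then show ?thesis unfolding eventually_at_top_dense by auto
      qed
      show "((\<lambda>\<sigma>::real. dir_eval (Epow i) (of_real \<sigma>) * of_nat (r^i) powr (of_real \<sigma>)) \<longlongrightarrow> (B r)^i) at_top"
        using Lim_transform_eventually[OF tendsto_power[OF Elim] ev] .
    qed
    define D where "D m N = (\<Sum>i\<le>m. of_nat (m choose i) * (B q)^(m-i) * shift (q^(m-i)) (Epow i) N)" for m N
    have dD: "dsumm (D m)" for m unfolding D_def by (intro dsumm_sum dsumm_scale dsumm_shift qp1 dEpow) auto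
    have Dev: "dir_eval (D m) s = (dir_eval B s)^m" if s: "s \<in> C0" for m s
    proof -
      have r0: "Re s \<ge> 0" using s by (simp add: C0_def)
      have "dir_eval (D m) s = (\<Sum>i\<le>m. dir_eval (\<lambda>N. of_nat (m choose i) * (B q)^(m-i) * shift (q^(m-i)) (Epow i) N) s)"
        unfolding D_def by (rule de_sum) (auto intro: dsumm_scale dsumm_shift qp1 dEpow r0)
      also have "\<dots> = (\<Sum>i\<le>m. of_nat (m choose i) * (B q)^(m-i) * (of_nat (q^(m-i)) powr (-s) * dir_eval (Epow i) s))"
        by (intro sum.cong refl) (simp only: de_scale[OF dsumm_shift[OF qp1 dEpow] r0] de_shift[OF qp1 dEpow r0])
      also have "\<dots> = (\<Sum>i\<le>m. of_nat (m choose i) * (dir_eval E s)^i * (B q * of_nat q powr (-s))^(m-i))"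
        by (intro sum.cong refl) (unfold qpow EpowEv[OF s], simp add: power_mult_distrib mult_ac)
      also have "\<dots> = (dir_eval E s + B q * of_nat q powr (-s))^m" by (rule binomial_ring[symmetric])
      also have "\<dots> = (dir_eval B s)^m" using BE[OF r0] by (simp add: add.commute)
      finally show ?thesis .
    qed
    have TD: "T (2^m) N = D m N" if "N \<ge> 1" for m N
      using uniq[OF dT dD _ that] Dev Tpow C0_real by auto
    define W where "W i = (if q^(c0-i) dvd r^c0 then Epow i (r^c0 div q^(c0-i)) else 0)" for i
    have key: "(\<Sum>i\<le>c0. of_nat (m choose i) * (W i / (B q)^i)) = 0" if m: "m \<ge> c0" for m
    proof -
      define X where "X = q^(m-c0) * r^c0"
      define nm where "nm = (2::nat)^(m-c0) * r"
      have nmX: "nm^c0 = X" unfolding nm_def X_def q_def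
        by (simp add: power_mult_distrib power_mult[symmetric] mult.commute)
      have snm: "smooth k nm" unfolding nm_def by (intro smooth_mult smooth_power s2 sr)
      have nmne: "nm \<noteq> 2^m"
      proof
        assume "nm = 2^m"
        then have "2^(m-c0) * r = 2^(m-c0) * q" unfolding nm_def q_def using m by (simp add: power_add[symmetric])
        then show False using rprop by simp
      qed
      have "T nm X \<noteq> 0" using LT[OF snm] nmX npow_nz sm1[OF snm] by auto
      then have "T (2^m) X = 0" using DJ[OF snm s2p nmne, of X] by auto
      moreover have X1: "X \<ge> 1" unfolding X_def using q2 r1 by simp
      ultimately have DX: "D m X = 0" using TD by simp
      have terms: "of_nat (m choose i) * (B q)^(m-i) * shift (q^(m-i)) (Epow i) X = (if i \<le> c0 then of_nat (m choose i) * (B q)^(m-i) * W i else 0)" if i: "i \<le> m" for i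
      proof (cases "i \<le> c0")
        case True
        have qs: "q^(m-i) = q^(m-c0) * q^(c0-i)" using True m by (simp add: power_add[symmetric])
        have qnz: "q^(m-c0) \<noteq> 0" using q2 by simp
        have "shift (q^(m-i)) (Epow i) X = W i"
          unfolding shift_def W_def X_def qs using qnz q2 by (simp add: nat_mult_dvd_cancel_disj div_mult_mult1)
        then show ?thesis using True by simp
      next
        case False
        have qs: "X = q^(m-i) * (q^(i-c0) * r^c0)" unfolding X_def using False i
          by (simp add: power_add[symmetric] mult.assoc[symmetric])
        have "shift (q^(m-i)) (Epow i) X = Epow i (q^(i-c0) * r^c0)"
          unfolding qs by (rule shift_at) (use q2 in simp)
        also have "\<dots> = 0"
        proof -
          have "q^(i-c0) * r^c0 < r^(i-c0) * r^c0" using rq False r1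
            by (intro mult_strict_right_mono power_strict_mono) auto
          also have "\<dots> = r^i" using False by (simp add: power_add[symmetric])
          finally have lt: "q^(i-c0) * r^c0 < r^i" .
          have ge: "1 \<le> q^(i-c0) * r^c0" using q2 r1 by simp
          show ?thesis using EpowLead[of i] lt ge by blast
        qed
        finally show ?thesis using False by simp
      qed
      have "D m X = (\<Sum>i\<le>m. if i \<le> c0 then of_nat (m choose i) * (B q)^(m-i) * W i else 0)"
        unfolding D_def by (intro sum.cong refl terms) auto
      also have "\<dots> = (\<Sum>i\<in>{i\<in>{..m}. i \<le> c0}. of_nat (m choose i) * (B q)^(m-i) * W i)"
        by (rule sum.inter_filter[symmetric]) simp
      also have "{i\<in>{..m}. i \<le> c0} = {..c0}" using m by auto
      also have "(\<Sum>i\<le>c0. of_nat (m choose i) * (B q)^(m-i) * W i) = (B q)^m * (\<Sum>i\<le>c0. of_nat (m choose i) * (W i / (B q)^i))"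
        unfolding sum_distrib_left
      proof (intro sum.cong refl)
        fix i assume "i \<in> {..c0}"
        then have "i \<le> m" using m by simp
        then show "of_nat (m choose i) * (B q)^(m-i) * W i = (B q)^m * (of_nat (m choose i) * (W i / (B q)^i))"
          using Bqnz by (simp add: power_diff field_simps)
      qed
      finally show ?thesis using DX Bqnz by simp
    qed
    have "\<forall>i\<le>c0. W i / (B q)^i = 0"
      by (rule poly_binom_zero[where M=c0 and c=c0 and y="\<lambda>i. W i / (B q)^i"]) (use key in \<open>simp only:\<close>)
    then have "W c0 = 0" using Bqnz by simp
    moreover have "W c0 = (B r)^c0" using EpowLead[of c0] by (simp add: W_def)
    ultimately have False using Brnz by simp
    then show ?thesis ..
  qed
qed


theorem theorem23:
  fixes k c0 :: nat and \<psi> \<phi> :: "complex \<Rightarrow> complex"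
  assumes "k \<ge> 1"
    and "\<psi> \<in> Dk k"
    and "\<phi> = (\<lambda>s. of_nat c0 * s + \<psi> s)"
    and "\<phi> holomorphic_on C0"
    and "\<phi> ` C0 \<subseteq> C0"
    and "\<not> (\<exists>c. \<forall>s\<in>C0. \<phi> s = c)"
    and "comp_maps_into k \<phi>"
  shows "comp_isometry k \<phi> \<longleftrightarrow>
           (c0 \<ge> 1 \<and> (\<exists>\<tau>::real. \<forall>s\<in>C0. \<phi> s = of_nat c0 * s + \<i> * of_real \<tau>))"
proof
  assume iso: "comp_isometry k \<phi>"
  show "c0 \<ge> 1 \<and> (\<exists>\<tau>::real. \<forall>s\<in>C0. \<phi> s = of_nat c0 * s + \<i> * of_real \<tau>)"
    by (rule forward[OF assms(1,2,3,5,7) iso])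
next
  assume H: "c0 \<ge> 1 \<and> (\<exists>\<tau>::real. \<forall>s\<in>C0. \<phi> s = of_nat c0 * s + \<i> * of_real \<tau>)"
  then obtain \<tau> :: real where "\<forall>s\<in>C0. \<phi> s = of_nat c0 * s + \<i> * of_real \<tau>" by blast
  then show "comp_isometry k \<phi>" using H by (intro backward) auto
qed

end
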